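(* Let $\mathcal{R},\mathcal{R}_1,\ldots,\mathcal{R}_s,\mathcal{C},\mathcal{C}_1,\ldots,\mathcal{C}_t$ be partitions of $\{1,\ldots,n\}$ such that $\mathcal{R}$ is finer than each $\mathcal{R}_i$ and $\mathcal{C}$ is finer than each $\mathcal{C}_j$. Then \[ \mathcal{L}(\mathcal{R}_i\times\mathcal{C}:\ 1\le i\le s)\cap\mathcal{L}(\mathcal{R}\times\mathcal{C}_j:\ 1\le j\le t)=\mathcal{L}(\mathcal{R}_i\times\mathcal{C}_j:\ 1\le i\le s,\ 1\le j\le t). \]
   Context: $S_n$ is the group of permutations of $\{1,\ldots,n\}$. A partition $\mathcal{Z}$ is finer than $\mathcal{W}$ if every block of $\mathcal{Z}$ lies in some block of $\mathcal{W}$. For partitions $\mathcal{R}=(R_i)$, $\mathcal{C}=(C_j)$ of $\{1,\ldots,n\}$, the product partition $\mathcal{R}\times\mathcal{C}=(R_i\times C_j)$ of the $n\times n$ board has marginal $|\pi_{\mathcal{R}\times\mathcal{C}}|=(t_{ij})$, $t_{ij}=|\{s:(s,\pi(s))\in R_i\times C_j\}|$, for $\pi\in S_n$. $U^{\mathcal{B}}=\{v\in\mathbb{R}^{S_n}: |\pi_{\mathcal{B}}|=|\sigma_{\mathcal{B}}|\Rightarrow v(\pi)=v(\sigma)\}$. The log-linear model $\mathcal{L}(\mathcal{B}_1,\ldots,\mathcal{B}_m)$ is the set of strictly positive probability distributions $p$ on $S_n$ with $\log p\in\mathrm{Span}(U^{\mathcal{B}_1},\ldots,U^{\mathcal{B}_m})$.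 *)

theory Defs
  imports "HOL-Analysis.Analysis" "HOL-Combinatorics.Combinatorics" "HOL-Library.Disjoint_Sets" "HOL-Library.Function_Algebras"
begin

text \<open>The symmetric group S_n: permutations of {1..n}, as functions nat => nat
  that are the identity outside {1..n}.\<close>
definition Sym :: "nat \<Rightarrow> (nat \<Rightarrow> nat) set" where
  "Sym n = {\<pi>. \<pi> permutes {1..n}}"

definition finer :: "'a set set \<Rightarrow> 'a set set \<Rightarrow> bool" where
  "finer Z W \<longleftrightarrow> (\<forall>A\<in>Z. \<exists>B\<in>W. A \<subseteq> B)"

definition marg_entry :: "nat \<Rightarrow> (nat \<Rightarrow> nat) \<Rightarrow> nat set \<Rightarrow> nat set \<Rightarrow> nat" where
  "marg_entry n \<pi> A B = card {s \<in> {1..n}. s \<in> A \<and> \<pi> s \<in> B}"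

definition marginal :: "nat \<Rightarrow> nat set set \<times> nat set set \<Rightarrow> (nat \<Rightarrow> nat) \<Rightarrow> (nat set \<times> nat set \<Rightarrow> nat)" where
  "marginal n RC \<pi> = (\<lambda>(A, B). if A \<in> fst RC \<and> B \<in> snd RC then marg_entry n \<pi> A B else 0)"

text \<open>Vectors in R^{S_n} are functions on S_n; we represent them as functions
  (nat => nat) => real that vanish outside S_n.\<close>
definition vecs :: "nat \<Rightarrow> ((nat \<Rightarrow> nat) \<Rightarrow> real) set" where
  "vecs n = {v. \<forall>\<pi>. \<pi> \<notin> Sym n \<longrightarrow> v \<pi> = 0}"

definition U :: "nat \<Rightarrow> nat set set \<times> nat set set \<Rightarrow> ((nat \<Rightarrow> nat) \<Rightarrow> real) set" where
  "U n RC = {v \<in> vecs n. \<forall>\<pi>\<in>Sym n. \<forall>\<sigma>\<in>Sym n.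
              marginal n RC \<pi> = marginal n RC \<sigma> \<longrightarrow> v \<pi> = v \<sigma>}"

definition fscale :: "real \<Rightarrow> ((nat \<Rightarrow> nat) \<Rightarrow> real) \<Rightarrow> ((nat \<Rightarrow> nat) \<Rightarrow> real)" where
  "fscale r v = (\<lambda>x. r * v x)"

abbreviation fspan :: "((nat \<Rightarrow> nat) \<Rightarrow> real) set \<Rightarrow> ((nat \<Rightarrow> nat) \<Rightarrow> real) set" where
  "fspan \<equiv> module.span fscale"

definition loglin :: "nat \<Rightarrow> (nat set set \<times> nat set set) set \<Rightarrow> ((nat \<Rightarrow> nat) \<Rightarrow> real) set" where
  "loglin n F = {p. (\<forall>\<pi>\<in>Sym n. p \<pi> > 0) \<and> (\<forall>\<pi>. \<pi> \<notin> Sym n \<longrightarrow> p \<pi> = 0)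
      \<and> (\<Sum>\<pi>\<in>Sym n. p \<pi>) = 1
      \<and> (\<lambda>\<pi>. if \<pi> \<in> Sym n then ln (p \<pi>) else 0) \<in> fspan (\<Union>B\<in>F. U n B)}"

end

theory Submission
  imports Defs
begin


interpretation FV: vector_space fscale
  by unfold_locales (auto simp: fscale_def algebra_simps)
interpretation FVP: vector_space_pair fscale fscale ..

lemma sum_fun_apply': "(\<Sum>g\<in>A. F g) x = (\<Sum>g\<in>A. F g x)"
  by (induction A rule: infinite_finite_induct) auto

lemma Sym_finite: "finite (Sym n)"
  unfolding Sym_def by (rule finite_permutations) simp

lemma Sym_id: "id \<in> Sym n" unfolding Sym_def by (simp add: permutes_id)

lemma Sym_comp: "g \<in> Sym n \<Longrightarrow> h \<in> Sym n \<Longrightarrow> g \<circ> h \<in> Sym n"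
  unfolding Sym_def by (simp add: permutes_compose)

lemma Sym_inv: "g \<in> Sym n \<Longrightarrow> inv g \<in> Sym n"
  unfolding Sym_def by (simp add: permutes_inv)

lemma Sym_inv_o: "g \<in> Sym n \<Longrightarrow> g \<circ> inv g = id \<and> inv g \<circ> g = id"
  unfolding Sym_def using permutes_inv_o by blast

lemma Sym_comp_notin: "g \<in> Sym n \<Longrightarrow> \<pi> \<notin> Sym n \<Longrightarrow> g \<circ> \<pi> \<notin> Sym n"
proof
  assume g: "g \<in> Sym n" and p: "\<pi> \<notin> Sym n" and gp: "g \<circ> \<pi> \<in> Sym n"
  have "inv g \<circ> (g \<circ> \<pi>) = \<pi>" using Sym_inv_o[OF g] by (simp add: o_assoc)
  moreover have "inv g \<circ> (g \<circ> \<pi>) \<in> Sym n" using Sym_comp[OF Sym_inv[OF g] gp] .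
  ultimately show False using p by simp
qed

definition Hs :: "nat \<Rightarrow> nat set set \<Rightarrow> (nat \<Rightarrow> nat) set" where
  "Hs n P = {g \<in> Sym n. \<forall>b\<in>P. \<forall>x. (g x \<in> b) = (x \<in> b)}"

lemma Hs_Sym: "c \<in> Hs n P \<Longrightarrow> c \<in> Sym n" unfolding Hs_def by auto
lemma Hs_id: "id \<in> Hs n P" unfolding Hs_def by (simp add: Sym_id)
lemma Hs_finite: "finite (Hs n P)"
  using Sym_finite by (rule finite_subset[rotated]) (auto simp: Hs_def)
lemma Hs_card: "card (Hs n P) > 0"
  using Hs_finite[of n P] Hs_id[of n P] by (auto simp: card_gt_0_iff)
lemma Hs_comp: "g \<in> Hs n P \<Longrightarrow> h \<in> Hs n P \<Longrightarrow> g \<circ> h \<in> Hs n P"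
  unfolding Hs_def by (auto simp: Sym_comp)
lemma Hs_inv: "g \<in> Hs n P \<Longrightarrow> inv g \<in> Hs n P"
proof -
  assume g: "g \<in> Hs n P"
  hence gS: "g \<in> Sym n" by (rule Hs_Sym)
  have "\<forall>b\<in>P. \<forall>x. (inv g x \<in> b) = (x \<in> b)"
  proof (intro ballI allI)
    fix b x assume "b \<in> P"
    hence "(g (inv g x) \<in> b) = (inv g x \<in> b)" using g unfolding Hs_def by blast
    moreover have "g (inv g x) = x" using Sym_inv_o[OF gS] by (metis comp_apply id_apply)
    ultimately show "(inv g x \<in> b) = (x \<in> b)" by simp
  qed
  thus ?thesis using Sym_inv[OF gS] unfolding Hs_def by auto
qed

definition blk :: "nat set set \<Rightarrow> nat \<Rightarrow> nat set" where
  "blk P x = (THE b. b \<in> P \<and> x \<in> b)"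

lemma part_unique: "partition_on S P \<Longrightarrow> b \<in> P \<Longrightarrow> b' \<in> P \<Longrightarrow> x \<in> b \<Longrightarrow> x \<in> b' \<Longrightarrow> b = b'"
  using partition_onD2 disjointD by blast

lemma blk_eq: "partition_on S P \<Longrightarrow> b \<in> P \<Longrightarrow> x \<in> b \<Longrightarrow> blk P x = b"
  unfolding blk_def by (rule the_equality) (auto dest: part_unique)

lemma blk_mem: "partition_on S P \<Longrightarrow> x \<in> S \<Longrightarrow> blk P x \<in> P \<and> x \<in> blk P x"
proof -
  assume P: "partition_on S P" and x: "x \<in> S"
  then obtain b where "b \<in> P" "x \<in> b" using partition_onD1 by blast
  thus ?thesis using blk_eq[OF P] by simp
qed

lemma blk_iff: "partition_on S P \<Longrightarrow> x \<in> S \<Longrightarrow> b \<in> P \<Longrightarrow> (x \<in> b) = (blk P x = b)"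
  using blk_eq blk_mem by metis

lemma fiber_bij:
  assumes "finite S" "finite T" "\<And>k. card {s\<in>S. f s = k} = card {t\<in>T. g t = k}"
  shows "\<exists>h. bij_betw h S T \<and> (\<forall>s\<in>S. g (h s) = f s)"
  using assms
proof (induction S arbitrary: T rule: finite_induct)
  case empty
  have "T = {}"
  proof (rule ccontr)
    assume "T \<noteq> {}" then obtain t where t: "t \<in> T" by blast
    have "card {t'\<in>T. g t' = g t} = 0" using empty(2)[of "g t"] by simp
    hence "{t'\<in>T. g t' = g t} = {}" using empty(1) by simp
    thus False using t by blast
  qed
  thus ?case by (auto simp: bij_betw_def)
next
  case (insert x S)
  have "card {t\<in>T. g t = f x} = card {s\<in>insert x S. f s = f x}" using insert(5) by simp
  also have "{s\<in>insert x S. f s = f x} = insert x {s\<in>S. f s = f x}" by auto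
  also have "card \<dots> = Suc (card {s\<in>S. f s = f x})" using insert(1,2) by simp
  finally have "{t\<in>T. g t = f x} \<noteq> {}" by (metis card.empty nat.distinct(1))
  then obtain y where y: "y \<in> T" "g y = f x" by blast
  have "\<exists>h. bij_betw h S (T - {y}) \<and> (\<forall>s\<in>S. g (h s) = f s)"
  proof (rule insert(3))
    show "finite (T - {y})" using insert(4) by simp
    fix k
    show "card {s \<in> S. f s = k} = card {t \<in> T - {y}. g t = k}"
    proof (cases "f x = k")
      case True
      have "{s\<in>insert x S. f s = k} = insert x {s\<in>S. f s = k}" using True by auto
      hence e1: "card {s\<in>insert x S. f s = k} = Suc (card {s\<in>S. f s = k})" using insert(1,2) by simp
      have "{t\<in>T. g t = k} = insert y {t\<in>T-{y}. g t = k}" using True y by auto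
      hence e2: "card {t\<in>T. g t = k} = Suc (card {t\<in>T-{y}. g t = k})" using insert(4) by simp
      show ?thesis using e1 e2 insert(5)[of k] by simp
    next
      case False
      have "{s\<in>insert x S. f s = k} = {s\<in>S. f s = k}" using False by auto
      moreover have "{t\<in>T. g t = k} = {t\<in>T-{y}. g t = k}" using False y by auto
      ultimately show ?thesis using insert(5)[of k] by simp
    qed
  qed
  then obtain h where h: "bij_betw h S (T - {y})" "\<forall>s\<in>S. g (h s) = f s" by blast
  define h' where "h' = h(x := y)"
  have "bij_betw h' (insert x S) T"
    unfolding bij_betw_def
  proof
    have "inj_on h' S" using h(1) insert(2) unfolding h'_def bij_betw_def
      by (metis fun_upd_other inj_on_cong)
    moreover have "h' x \<notin> h' ` S" using h(1) insert(2) unfolding h'_def bij_betw_def by auto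
    ultimately show "inj_on h' (insert x S)" using insert(2) by simp
    have "h' ` S = T - {y}" using h(1) insert(2) unfolding h'_def bij_betw_def
      by (metis fun_upd_other image_cong)
    thus "h' ` insert x S = T" using y unfolding h'_def by auto
  qed
  moreover have "\<forall>s\<in>insert x S. g (h' s) = f s" using h(2) y insert(2) unfolding h'_def by auto
  ultimately show ?case by blast
qed

lemma marg_left: "c \<in> Hs n (snd AB) \<Longrightarrow> marginal n AB (c \<circ> \<pi>) = marginal n AB \<pi>"
  unfolding marginal_def marg_entry_def Hs_def by (auto simp: fun_eq_iff)

lemma marg_right:
  assumes r: "r \<in> Hs n (fst AB)"
  shows "marginal n AB (\<pi> \<circ> r) = marginal n AB \<pi>"
proof -
  have rp: "r permutes {1..n}" using r unfolding Hs_def Sym_def by auto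
  have "marg_entry n (\<pi> \<circ> r) a b = marg_entry n \<pi> a b" if a: "a \<in> fst AB" for a b
  proof -
    have ra: "\<And>x. (r x \<in> a) = (x \<in> a)" using r a unfolding Hs_def by auto
    have "r ` {s \<in> {1..n}. s \<in> a \<and> \<pi> (r s) \<in> b} = {u \<in> {1..n}. u \<in> a \<and> \<pi> u \<in> b}"
    proof
      show "r ` {s \<in> {1..n}. s \<in> a \<and> \<pi> (r s) \<in> b} \<subseteq> {u \<in> {1..n}. u \<in> a \<and> \<pi> u \<in> b}"
        using ra permutes_in_image[OF rp] by auto
      show "{u \<in> {1..n}. u \<in> a \<and> \<pi> u \<in> b} \<subseteq> r ` {s \<in> {1..n}. s \<in> a \<and> \<pi> (r s) \<in> b}"
      proof
        fix u assume u: "u \<in> {u \<in> {1..n}. u \<in> a \<and> \<pi> u \<in> b}"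
        have "u = r (inv r u)" using permutes_inverses[OF rp] by simp
        moreover have "inv r u \<in> {s \<in> {1..n}. s \<in> a \<and> \<pi> (r s) \<in> b}"
          using u ra[of "inv r u"] permutes_inverses[OF rp] permutes_in_image[OF rp, of "inv r u"] by auto
        ultimately show "u \<in> r ` {s \<in> {1..n}. s \<in> a \<and> \<pi> (r s) \<in> b}" by blast
      qed
    qed
    note img = this
    have inj: "inj_on r {s \<in> {1..n}. s \<in> a \<and> \<pi> (r s) \<in> b}"
      using permutes_inj[OF rp] by (simp add: inj_on_def inj_def)
    have "marg_entry n (\<pi> \<circ> r) a b = card {s \<in> {1..n}. s \<in> a \<and> \<pi> (r s) \<in> b}"
      by (simp add: marg_entry_def)
    also have "\<dots> = card (r ` {s \<in> {1..n}. s \<in> a \<and> \<pi> (r s) \<in> b})"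
      using card_image[OF inj] by simp
    also have "\<dots> = marg_entry n \<pi> a b" unfolding img marg_entry_def ..
    finally show ?thesis .
  qed
  thus ?thesis unfolding marginal_def by (auto simp: fun_eq_iff)
qed

lemma U_left: "v \<in> U n (A, B) \<Longrightarrow> c \<in> Hs n B \<Longrightarrow> \<pi> \<in> Sym n \<Longrightarrow> v (c \<circ> \<pi>) = v \<pi>"
proof -
  assume v: "v \<in> U n (A, B)" and c: "c \<in> Hs n B" and p: "\<pi> \<in> Sym n"
  have m: "marginal n (A,B) (c \<circ> \<pi>) = marginal n (A,B) \<pi>" using marg_left[of c n "(A,B)"] c by simp
  have "c \<circ> \<pi> \<in> Sym n" using Sym_comp[OF Hs_Sym[OF c] p] .
  thus ?thesis using v p m unfolding U_def by blast
qed

lemma U_right: "v \<in> U n (A, B) \<Longrightarrow> r \<in> Hs n A \<Longrightarrow> \<pi> \<in> Sym n \<Longrightarrow> v (\<pi> \<circ> r) = v \<pi>"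
proof -
  assume v: "v \<in> U n (A, B)" and c: "r \<in> Hs n A" and p: "\<pi> \<in> Sym n"
  have m: "marginal n (A,B) (\<pi> \<circ> r) = marginal n (A,B) \<pi>" using marg_right[of r n "(A,B)"] c by simp
  have "\<pi> \<circ> r \<in> Sym n" using Sym_comp[OF p Hs_Sym[OF c]] .
  thus ?thesis using v p m unfolding U_def by blast
qed

lemma U_vecs: "v \<in> U n AB \<Longrightarrow> v \<in> vecs n" unfolding U_def by auto

lemma Sym_perm: "g \<in> Sym n \<Longrightarrow> g permutes {1..n}" unfolding Sym_def by simp

lemma double_coset:
  assumes A: "partition_on {1..n} A" and B: "partition_on {1..n} B"
    and p: "\<pi> \<in> Sym n" and q: "\<sigma> \<in> Sym n"
    and m: "marginal n (A,B) \<pi> = marginal n (A,B) \<sigma>"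
  shows "\<exists>c\<in>Hs n B. \<exists>r\<in>Hs n A. \<sigma> = c \<circ> \<pi> \<circ> r"
proof -
  have pp: "\<pi> permutes {1..n}" and qp: "\<sigma> permutes {1..n}" using Sym_perm[OF p] Sym_perm[OF q] by blast+
  define kp where "kp s = (blk A s, blk B (\<pi> s))" for s
  define kq where "kq s = (blk A s, blk B (\<sigma> s))" for s
  have fib: "card {s\<in>{1..n}. kq s = k} = card {t\<in>{1..n}. kp t = k}" for k
  proof (cases k)
    case (Pair a b)
    show ?thesis
    proof (cases "a \<in> A \<and> b \<in> B")
      case True
      have e1: "{s\<in>{1..n}. kq s = k} = {s\<in>{1..n}. s \<in> a \<and> \<sigma> s \<in> b}"
        using True Pair blk_iff[OF A] blk_iff[OF B] permutes_in_image[OF qp] unfolding kq_def by auto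
      have e2: "{s\<in>{1..n}. kp s = k} = {s\<in>{1..n}. s \<in> a \<and> \<pi> s \<in> b}"
        using True Pair blk_iff[OF A] blk_iff[OF B] permutes_in_image[OF pp] unfolding kp_def by auto
      have "marginal n (A,B) \<pi> (a,b) = marginal n (A,B) \<sigma> (a,b)" using m by simp
      hence "marg_entry n \<pi> a b = marg_entry n \<sigma> a b" using True unfolding marginal_def by simp
      thus ?thesis unfolding e1 e2 marg_entry_def by simp
    next
      case False
      have "{s\<in>{1..n}. kq s = k} = {}" "{s\<in>{1..n}. kp s = k} = {}"
        using False Pair blk_mem[OF A] blk_mem[OF B] permutes_in_image[OF qp] permutes_in_image[OF pp]
        unfolding kq_def kp_def by auto
      thus ?thesis by (simp only:)
    qed
  qed
  obtain h where h: "bij_betw h {1..n} {1..n}" "\<forall>s\<in>{1..n}. kp (h s) = kq s"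
    using fiber_bij[of "{1..n}" "{1..n}" kq kp] fib by auto
  define r where "r s = (if s \<in> {1..n} then h s else s)" for s
  have rb: "bij_betw r {1..n} {1..n}" using h(1) by (rule bij_betw_cong[THEN iffD1, rotated]) (simp add: r_def)
  have rp: "r permutes {1..n}" by (rule bij_imp_permutes[OF rb]) (simp only: r_def if_False)
  have rin: "s \<in> {1..n} \<Longrightarrow> r s \<in> {1..n}" for s using permutes_in_image[OF rp] by simp
  have rblk: "s \<in> {1..n} \<Longrightarrow> blk A (r s) = blk A s \<and> blk B (\<pi> (r s)) = blk B (\<sigma> s)" for s
    using h(2) unfolding r_def kp_def kq_def by auto
  have rA: "r \<in> Hs n A"
  proof -
    have "(r x \<in> a) = (x \<in> a)" if a: "a \<in> A" for a x
    proof (cases "x \<in> {1..n}")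
      case True
      thus ?thesis using blk_iff[OF A rin[OF True] a] blk_iff[OF A True a] rblk[OF True] by simp
    next
      case False thus ?thesis by (simp only: r_def if_False)
    qed
    thus ?thesis using rp unfolding Hs_def Sym_def by auto
  qed
  define c where "c = \<sigma> \<circ> inv (\<pi> \<circ> r)"
  have prp: "\<pi> \<circ> r permutes {1..n}" using permutes_compose[OF rp pp] .
  have eq: "\<sigma> = c \<circ> \<pi> \<circ> r"
    unfolding c_def using permutes_inv_o(2)[OF prp] by (simp add: o_assoc[symmetric])
  have cB: "c \<in> Hs n B"
  proof -
    have "(c x \<in> b) = (x \<in> b)" if b: "b \<in> B" for b x
    proof -
      define y where "y = inv (\<pi> \<circ> r) x"
      have x: "x = \<pi> (r y)" unfolding y_def using permutes_inverses(1)[OF prp] by simp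
      have cx: "c x = \<sigma> y" unfolding c_def y_def by simp
      show ?thesis
      proof (cases "y \<in> {1..n}")
        case True
        have "\<sigma> y \<in> {1..n}" "\<pi> (r y) \<in> {1..n}" using True rin[OF True] permutes_in_image[OF qp] permutes_in_image[OF pp] by auto
        thus ?thesis unfolding cx unfolding x using blk_iff[OF B _ b] rblk[OF True] by metis
      next
        case False
        have "r y = y" using False by (simp only: r_def if_False)
        thus ?thesis unfolding cx unfolding x using False permutes_not_in[OF qp] permutes_not_in[OF pp] by simp
      qed
    qed
    moreover have "c \<in> Sym n" unfolding c_def Sym_def using permutes_compose[OF permutes_inv[OF prp] qp] by simp
    ultimately show ?thesis unfolding Hs_def by auto
  qed
  show ?thesis using eq cB rA by blast
qed

lemma invar_U:
  assumes A: "partition_on {1..n} A" and B: "partition_on {1..n} B" and v: "v \<in> vecs n"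
    and L: "\<And>\<pi> c. \<pi> \<in> Sym n \<Longrightarrow> c \<in> Hs n B \<Longrightarrow> v (c \<circ> \<pi>) = v \<pi>"
    and R: "\<And>\<pi> r. \<pi> \<in> Sym n \<Longrightarrow> r \<in> Hs n A \<Longrightarrow> v (\<pi> \<circ> r) = v \<pi>"
  shows "v \<in> U n (A, B)"
  unfolding U_def
proof (intro CollectI conjI v ballI impI)
  fix \<pi> \<sigma> assume p: "\<pi> \<in> Sym n" and q: "\<sigma> \<in> Sym n" and m: "marginal n (A, B) \<pi> = marginal n (A, B) \<sigma>"
  obtain c r where c: "c \<in> Hs n B" and r: "r \<in> Hs n A" and e: "\<sigma> = c \<circ> \<pi> \<circ> r"
    using double_coset[OF A B p q m] by blast
  have pr: "\<pi> \<circ> r \<in> Sym n" using Sym_comp[OF p Hs_Sym[OF r]] .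
  have "v \<sigma> = v (c \<circ> (\<pi> \<circ> r))" unfolding e by (simp add: o_assoc)
  also have "\<dots> = v (\<pi> \<circ> r)" using L[OF pr c] .
  also have "\<dots> = v \<pi>" using R[OF p r] .
  finally show "v \<pi> = v \<sigma>" by simp
qed

lemma span_map:
  assumes add: "\<And>x y. f (x + y) = f x + f y" and sc: "\<And>c x. f (fscale c x) = fscale c (f x)"
    and img: "\<And>x. x \<in> S \<Longrightarrow> f x \<in> FV.span T" and x: "x \<in> FV.span S"
  shows "f x \<in> FV.span T"
proof -
  have f0: "f 0 = 0" using add[of 0 0] by simp
  have "FV.subspace {x. f x \<in> FV.span T}"
    unfolding FV.subspace_def using f0 add sc FV.span_zero FV.span_add FV.span_scale by auto
  then show ?thesis using FV.span_induct[OF x] img by blast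
qed

lemma vecs_subspace: "FV.subspace (vecs n)"
  unfolding FV.subspace_def vecs_def by (auto simp: fscale_def)

lemma span_vecs: "S \<subseteq> vecs n \<Longrightarrow> FV.span S \<subseteq> vecs n"
  using FV.span_minimal vecs_subspace by blast

definition lt :: "(nat \<Rightarrow> nat) \<Rightarrow> ((nat \<Rightarrow> nat) \<Rightarrow> real) \<Rightarrow> ((nat \<Rightarrow> nat) \<Rightarrow> real)" where
  "lt g v = (\<lambda>\<pi>. v (g \<circ> \<pi>))"

lemma lt_add: "lt g (x + y) = lt g x + lt g y" by (simp add: lt_def fun_eq_iff)
lemma lt_scale: "lt g (fscale c x) = fscale c (lt g x)" by (simp add: lt_def fun_eq_iff fscale_def)
lemma lt_lt: "lt g (lt h v) = lt (h \<circ> g) v" by (simp add: lt_def o_assoc)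

lemma proj_exists:
  assumes X: "X = FV.span Y" and inv: "\<And>g x. g \<in> Sym n \<Longrightarrow> x \<in> X \<Longrightarrow> lt g x \<in> X"
  shows "\<exists>P. (\<forall>x y. P (x+y) = P x + P y) \<and> (\<forall>c x. P (fscale c x) = fscale c (P x))
    \<and> (\<forall>v. P v \<in> X) \<and> (\<forall>x\<in>X. P x = x) \<and> (\<forall>h\<in>Sym n. \<forall>v. P (lt h v) = lt h (P v))"
proof -
  obtain B where B: "B \<subseteq> X" "FV.independent B" "X \<subseteq> FV.span B"
    using FV.maximal_independent_subset by blast
  obtain P0 where P0: "Vector_Spaces.linear fscale fscale P0" "\<forall>x\<in>B. P0 x = x" "range P0 = FV.span (id ` B)"
    using FVP.linear_independent_extend_subspace[OF B(2), of id] by auto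
  have spB: "FV.span B = X"
  proof
    show "FV.span B \<subseteq> X" using FV.span_mono[OF B(1)] X FV.span_span by simp
  qed (rule B(3))
  have P0add: "\<And>x y. P0 (x + y) = P0 x + P0 y" and P0sc: "\<And>c x. P0 (fscale c x) = fscale c (P0 x)"
    using P0(1) unfolding Vector_Spaces.linear_iff by auto
  have P0X: "P0 v \<in> X" for v using P0(3) spB by auto
  have P0id: "P0 x = x" if x: "x \<in> X" for x
  proof -
    have "FV.subspace {x. P0 x = x}"
      unfolding FV.subspace_def using P0add P0sc P0add[of 0 0] by auto
    thus ?thesis using FV.span_induct[of x B "\<lambda>x. P0 x = x"] x spB P0(2) by auto
  qed
  define G where "G = Sym n"
  define N where "N = card G"
  have Gfin: "finite G" unfolding G_def by (rule Sym_finite)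
  have Npos: "N > 0" unfolding N_def using Gfin Sym_id[of n] by (auto simp: G_def card_gt_0_iff)
  define P where "P v = (\<lambda>\<pi>. (\<Sum>g\<in>G. P0 (lt g v) (inv g \<circ> \<pi>)) / real N)" for v
  have P_alt: "P v = fscale (1 / real N) (\<Sum>g\<in>G. lt (inv g) (P0 (lt g v)))" for v
    unfolding P_def fscale_def by (simp add: fun_eq_iff sum_fun_apply' lt_def)
  have PX: "P v \<in> X" for v
  proof -
    have "(\<Sum>g\<in>G. lt (inv g) (P0 (lt g v))) \<in> X"
      unfolding X by (rule FV.span_sum) (use inv Sym_inv P0X in \<open>auto simp: G_def X\<close>)
    thus ?thesis unfolding P_alt using FV.span_scale X by blast
  qed
  have Padd: "P (x + y) = P x + P y" for x y
    unfolding P_def by (simp add: fun_eq_iff lt_add P0add sum.distrib add_divide_distrib)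
  have Psc: "P (fscale c x) = fscale c (P x)" for c x
    unfolding P_def lt_scale P0sc by (simp add: fun_eq_iff sum_distrib_left fscale_def)
  have Pid: "P x = x" if x: "x \<in> X" for x
  proof -
    have "P0 (lt g x) (inv g \<circ> \<pi>) = x \<pi>" if g: "g \<in> G" for g \<pi>
    proof -
      have "P0 (lt g x) = lt g x" using P0id inv x g by (simp add: G_def)
      moreover have "g \<circ> (inv g \<circ> \<pi>) = \<pi>" using Sym_inv_o[of g n] g by (simp add: G_def o_assoc)
      ultimately show ?thesis by (simp add: lt_def)
    qed
    hence "(\<Sum>g\<in>G. P0 (lt g x) (inv g \<circ> \<pi>)) = real N * x \<pi>" for \<pi> by (simp add: N_def)
    thus ?thesis unfolding P_def using Npos by (simp add: fun_eq_iff)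
  qed
  have Pcomm: "P (lt h v) = lt h (P v)" if h: "h \<in> Sym n" for h v
  proof -
    have hb: "bij h" using h Sym_perm permutes_bij by blast
    have injh: "inj_on ((\<circ>) h) G"
    proof (rule inj_onI)
      fix g g' assume "h \<circ> g = h \<circ> g'"
      hence "inv h \<circ> (h \<circ> g) = inv h \<circ> (h \<circ> g')" by simp
      thus "g = g'" using Sym_inv_o[OF h] by (simp add: o_assoc)
    qed
    have imh: "(\<circ>) h ` G = G"
    proof
      show "(\<circ>) h ` G \<subseteq> G" using Sym_comp[OF h] by (auto simp: G_def)
      show "G \<subseteq> (\<circ>) h ` G"
      proof
        fix k assume k: "k \<in> G"
        have "k = h \<circ> (inv h \<circ> k)" using Sym_inv_o[OF h] by (simp add: o_assoc)
        moreover have "inv h \<circ> k \<in> G" using Sym_comp[OF Sym_inv[OF h]] k by (simp add: G_def)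
        ultimately show "k \<in> (\<circ>) h ` G" by blast
      qed
    qed
    have "(\<Sum>k\<in>G. P0 (lt k v) (inv k \<circ> (h \<circ> \<pi>))) = (\<Sum>g\<in>G. P0 (lt (h \<circ> g) v) (inv g \<circ> \<pi>))" for \<pi>
    proof -
      have "(\<Sum>k\<in>G. P0 (lt k v) (inv k \<circ> (h \<circ> \<pi>))) = (\<Sum>g\<in>G. P0 (lt (h \<circ> g) v) (inv (h \<circ> g) \<circ> (h \<circ> \<pi>)))"
        using sum.reindex[OF injh, of "\<lambda>k. P0 (lt k v) (inv k \<circ> (h \<circ> \<pi>))"] imh by simp
      also have "\<dots> = (\<Sum>g\<in>G. P0 (lt (h \<circ> g) v) (inv g \<circ> \<pi>))"
      proof (rule sum.cong[OF refl])
        fix g assume g: "g \<in> G"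
        have gb: "bij g" using g Sym_perm permutes_bij by (auto simp: G_def)
        have "inv (h \<circ> g) \<circ> (h \<circ> \<pi>) = inv g \<circ> (inv h \<circ> h) \<circ> \<pi>"
          using o_inv_distrib[OF hb gb] by (simp add: o_assoc)
        also have "\<dots> = inv g \<circ> \<pi>" using Sym_inv_o[OF h] by simp
        finally show "P0 (lt (h \<circ> g) v) (inv (h \<circ> g) \<circ> (h \<circ> \<pi>)) = P0 (lt (h \<circ> g) v) (inv g \<circ> \<pi>)" by simp
      qed
      finally show ?thesis .
    qed
    thus ?thesis unfolding P_def lt_lt by (simp add: fun_eq_iff lt_def[of h])
  qed
  show ?thesis using Padd Psc PX Pid Pcomm by blast
qed

lemma Hs_finer:
  assumes C: "partition_on {1..n} C" and C': "partition_on {1..n} C'" and f: "finer C C'"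
  shows "Hs n C \<subseteq> Hs n C'"
proof
  fix g assume g: "g \<in> Hs n C"
  have gp: "g permutes {1..n}" using Hs_Sym[OF g] Sym_perm by blast
  have "(g x \<in> b') = (x \<in> b')" if b': "b' \<in> C'" for b' x
  proof (cases "x \<in> {1..n}")
    case True
    obtain a where a: "a \<in> C" "x \<in> a" using blk_mem[OF C True] by blast
    obtain b'' where b'': "b'' \<in> C'" "a \<subseteq> b''" using f a(1) unfolding finer_def by blast
    have ga: "g x \<in> a" using g a unfolding Hs_def by blast
    have "(x \<in> b') = (b' = b'')" using part_unique[OF C' b' b''(1)] a(2) b''(2) by blast
    moreover have "(g x \<in> b') = (b' = b'')" using part_unique[OF C' b' b''(1)] ga b''(2) by blast
    ultimately show ?thesis by simp
  next
    case False thus ?thesis using permutes_not_in[OF gp] by simp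
  qed
  thus "g \<in> Hs n C'" using Hs_Sym[OF g] unfolding Hs_def by auto
qed

lemma U_mono:
  assumes "partition_on {1..n} A" "partition_on {1..n} B" "Hs n A \<subseteq> Hs n A'" "Hs n B \<subseteq> Hs n B'"
    and v: "v \<in> U n (A', B')"
  shows "v \<in> U n (A, B)"
  by (rule invar_U[OF assms(1,2) U_vecs[OF v]]) (use U_left[OF v] U_right[OF v] assms(3,4) in auto)

lemma sum_Hs_reindex:
  assumes c0: "c0 \<in> Hs n P"
  shows "(\<Sum>c\<in>Hs n P. f (c \<circ> c0)) = (\<Sum>c\<in>Hs n P. f c)"
proof (rule sum.reindex_bij_witness[where i="\<lambda>c. c \<circ> inv c0" and j="\<lambda>c. c \<circ> c0"])
  have io: "c0 \<circ> inv c0 = id \<and> inv c0 \<circ> c0 = id" using Sym_inv_o[OF Hs_Sym[OF c0]] .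
  show "\<And>a. a \<in> Hs n P \<Longrightarrow> a \<circ> c0 \<circ> inv c0 = a" using io by (simp add: o_assoc[symmetric])
  show "\<And>a. a \<in> Hs n P \<Longrightarrow> a \<circ> inv c0 \<circ> c0 = a" using io by (simp add: o_assoc[symmetric])
  show "\<And>a. a \<in> Hs n P \<Longrightarrow> a \<circ> c0 \<in> Hs n P" using Hs_comp c0 by blast
  show "\<And>a. a \<in> Hs n P \<Longrightarrow> a \<circ> inv c0 \<in> Hs n P" using Hs_comp Hs_inv c0 by blast
qed simp


lemma key:
  fixes n s t :: nat
    and R C :: "nat set set"
    and Rs Cs :: "nat \<Rightarrow> nat set set"
  assumes PR: "partition_on {1..n} R"
    and PC: "partition_on {1..n} C"
    and PRs: "\<And>i. i \<in> {1..s} \<Longrightarrow> partition_on {1..n} (Rs i)"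
    and PCs: "\<And>j. j \<in> {1..t} \<Longrightarrow> partition_on {1..n} (Cs j)"
    and FR: "\<And>i. i \<in> {1..s} \<Longrightarrow> finer R (Rs i)"
    and FC: "\<And>j. j \<in> {1..t} \<Longrightarrow> finer C (Cs j)"
  shows "FV.span (\<Union>B\<in>(\<lambda>i. (Rs i, C)) ` {1..s}. U n B) \<inter> FV.span (\<Union>B\<in>(\<lambda>j. (R, Cs j)) ` {1..t}. U n B)
         = FV.span (\<Union>B\<in>(\<lambda>(i, j). (Rs i, Cs j)) ` ({1..s} \<times> {1..t}). U n B)"
    (is "?V1 \<inter> ?V2 = ?V3")
proof
  show "?V3 \<subseteq> ?V1 \<inter> ?V2"
  proof (intro Int_greatest FV.span_mono subsetI)
    fix v assume "v \<in> (\<Union>B\<in>(\<lambda>(i, j). (Rs i, Cs j)) ` ({1..s} \<times> {1..t}). U n B)"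
    then obtain i j where ij: "i \<in> {1..s}" "j \<in> {1..t}" and v: "v \<in> U n (Rs i, Cs j)" by auto
    have "v \<in> U n (Rs i, C)"
      by (rule U_mono[OF PRs[OF ij(1)] PC subset_refl Hs_finer[OF PC PCs[OF ij(2)] FC[OF ij(2)]] v])
    thus "v \<in> (\<Union>B\<in>(\<lambda>i. (Rs i, C)) ` {1..s}. U n B)" using ij by auto
    have "v \<in> U n (R, Cs j)"
      by (rule U_mono[OF PR PCs[OF ij(2)] Hs_finer[OF PR PRs[OF ij(1)] FR[OF ij(1)]] subset_refl v])
    thus "v \<in> (\<Union>B\<in>(\<lambda>j. (R, Cs j)) ` {1..t}. U n B)" using ij by auto
  qed
  show "?V1 \<inter> ?V2 \<subseteq> ?V3"
  proof
    fix v assume v: "v \<in> ?V1 \<inter> ?V2"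
    define Xi where "Xi i = {v \<in> vecs n. \<forall>\<pi>\<in>Sym n. \<forall>r\<in>Hs n (Rs i). v (\<pi> \<circ> r) = v \<pi>}" for i
    define X where "X = FV.span (\<Union>i\<in>{1..s}. Xi i)"
    have Xinv: "lt g x \<in> X" if g: "g \<in> Sym n" and x: "x \<in> X" for g x
      unfolding X_def
    proof (rule span_map[OF lt_add lt_scale _ x[unfolded X_def]])
      fix y assume "y \<in> (\<Union>i\<in>{1..s}. Xi i)"
      then obtain i where i: "i \<in> {1..s}" and y: "y \<in> Xi i" by blast
      have "lt g y \<in> Xi i"
      proof -
        have "lt g y \<in> vecs n" using y Sym_comp_notin[OF g] unfolding Xi_def vecs_def lt_def by auto
        moreover have "lt g y (\<pi> \<circ> r) = lt g y \<pi>" if "\<pi> \<in> Sym n" "r \<in> Hs n (Rs i)" for \<pi> r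
          using y that Sym_comp[OF g] unfolding Xi_def lt_def by (simp add: o_assoc)
        ultimately show ?thesis unfolding Xi_def by blast
      qed
      thus "lt g y \<in> FV.span (\<Union>i\<in>{1..s}. Xi i)" using i FV.span_superset by blast
    qed
    obtain P where Padd: "\<And>x y. P (x+y) = P x + P y" and Psc: "\<And>c x. P (fscale c x) = fscale c (P x)"
      and PX: "\<And>v. P v \<in> X" and Pid: "\<And>x. x \<in> X \<Longrightarrow> P x = x"
      and Pcomm: "\<And>h v. h \<in> Sym n \<Longrightarrow> P (lt h v) = lt h (P v)"
      using proj_exists[where n=n, OF X_def Xinv] by blast
    have V1X: "?V1 \<subseteq> X" unfolding X_def
    proof (rule FV.span_mono, rule subsetI)
      fix u assume "u \<in> (\<Union>B\<in>(\<lambda>i. (Rs i, C)) ` {1..s}. U n B)"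
      then obtain i where i: "i \<in> {1..s}" and u: "u \<in> U n (Rs i, C)" by auto
      have "u \<in> Xi i" unfolding Xi_def using U_vecs[OF u] U_right[OF u] by blast
      thus "u \<in> (\<Union>i\<in>{1..s}. Xi i)" using i by blast
    qed
    have "v \<in> X" using V1X v by (meson IntD1 subsetD)
    hence "v = P v" using Pid by simp
    also have "P v \<in> ?V3"
    proof (rule span_map[where f=P and x=v, OF Padd Psc])
      show "v \<in> ?V2" using v by (rule IntD2)
      fix u assume "u \<in> (\<Union>B\<in>(\<lambda>j. (R, Cs j)) ` {1..t}. U n B)"
      then obtain j where j: "j \<in> {1..t}" and u: "u \<in> U n (R, Cs j)" by auto
      define H where "H = Hs n (Cs j)"
      define w where "w = P u"
      have ltu: "lt c u = u" if c: "c \<in> H" for c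
      proof
        fix \<pi> show "lt c u \<pi> = u \<pi>"
        proof (cases "\<pi> \<in> Sym n")
          case True thus ?thesis using U_left[OF u] c unfolding H_def lt_def by simp
        next
          case False
          have "c \<circ> \<pi> \<notin> Sym n" using Sym_comp_notin[OF Hs_Sym False] c unfolding H_def by blast
          thus ?thesis using False U_vecs[OF u] unfolding lt_def vecs_def by simp
        qed
      qed
      have ltw: "lt c w = w" if c: "c \<in> H" for c
      proof -
        have "lt c w = P (lt c u)" unfolding w_def using Pcomm[OF Hs_Sym[of c n "Cs j"]] c unfolding H_def by simp
        thus ?thesis using ltu[OF c] unfolding w_def by simp
      qed
      define L where "L x = (\<lambda>\<pi>::nat\<Rightarrow>nat. (\<Sum>c\<in>H. x (c \<circ> \<pi>)) / real (card H))" for x :: "(nat \<Rightarrow> nat) \<Rightarrow> real"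
      have Hpos: "card H > 0" unfolding H_def by (rule Hs_card)
      have "L w = w"
      proof
        fix \<pi>
        have "w (c \<circ> \<pi>) = w \<pi>" if "c \<in> H" for c using fun_cong[OF ltw[OF that], of \<pi>] unfolding lt_def by simp
        thus "L w \<pi> = w \<pi>" unfolding L_def using Hpos by simp
      qed
      moreover have "L w \<in> ?V3"
      proof (rule span_map[where f=L and S="\<Union>i\<in>{1..s}. Xi i" and x=w])
        show "L (x + y) = L x + L y" for x y unfolding L_def by (simp add: fun_eq_iff sum.distrib add_divide_distrib)
        show "L (fscale c x) = fscale c (L x)" for c x unfolding L_def by (simp add: fun_eq_iff sum_distrib_left fscale_def)
        show "w \<in> FV.span (\<Union>i\<in>{1..s}. Xi i)" using PX[of u] unfolding w_def X_def .
        fix x assume "x \<in> (\<Union>i\<in>{1..s}. Xi i)"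
        then obtain i where i: "i \<in> {1..s}" and x: "x \<in> Xi i" by (elim UN_E)
        have "L x \<in> U n (Rs i, Cs j)"
        proof (rule invar_U[OF PRs[OF i] PCs[OF j]])
          show "L x \<in> vecs n"
          proof -
            have "L x \<pi> = 0" if "\<pi> \<notin> Sym n" for \<pi>
            proof -
              have "x (c \<circ> \<pi>) = 0" if "c \<in> H" for c
                using Sym_comp_notin[OF Hs_Sym[OF that[unfolded H_def]] \<open>\<pi> \<notin> Sym n\<close>] x
                unfolding Xi_def vecs_def by blast
              thus ?thesis unfolding L_def by simp
            qed
            thus ?thesis unfolding vecs_def by blast
          qed
          show "L x (c \<circ> \<pi>) = L x \<pi>" if "\<pi> \<in> Sym n" "c \<in> Hs n (Cs j)" for \<pi> c
          proof -
            have "(\<Sum>d\<in>H. x (d \<circ> (c \<circ> \<pi>))) = (\<Sum>d\<in>H. x ((d \<circ> c) \<circ> \<pi>))" by (simp add: o_assoc)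
            also have "\<dots> = (\<Sum>d\<in>H. x (d \<circ> \<pi>))"
              using sum_Hs_reindex[OF that(2), of "\<lambda>d. x (d \<circ> \<pi>)"] unfolding H_def .
            finally show ?thesis unfolding L_def by simp
          qed
          show "L x (\<pi> \<circ> r) = L x \<pi>" if "\<pi> \<in> Sym n" "r \<in> Hs n (Rs i)" for \<pi> r
          proof -
            have "x (d \<circ> (\<pi> \<circ> r)) = x (d \<circ> \<pi>)" if "d \<in> H" for d
            proof -
              have "d \<circ> \<pi> \<in> Sym n" using Sym_comp[OF Hs_Sym[OF that[unfolded H_def]] \<open>\<pi> \<in> Sym n\<close>] .
              thus ?thesis using x \<open>r \<in> Hs n (Rs i)\<close> unfolding Xi_def by (simp add: o_assoc)
            qed
            thus ?thesis unfolding L_def by simp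
          qed
        qed
        moreover have "(Rs i, Cs j) \<in> (\<lambda>(i, j). (Rs i, Cs j)) ` ({1..s} \<times> {1..t})" using i j by force
        ultimately have "L x \<in> (\<Union>B\<in>(\<lambda>(i, j). (Rs i, Cs j)) ` ({1..s} \<times> {1..t}). U n B)" by (rule UN_I[rotated])
        thus "L x \<in> ?V3" by (rule FV.span_base)
      qed
      ultimately have "w \<in> ?V3" by (simp only:)
      thus "P u \<in> ?V3" unfolding w_def .
    qed
    finally show "v \<in> ?V3" .
  qed
qed


theorem corollary1:
  fixes n s t :: nat
    and R C :: "nat set set"
    and Rs Cs :: "nat \<Rightarrow> nat set set"
  assumes "partition_on {1..n} R"
    and "partition_on {1..n} C"
    and "\<And>i. i \<in> {1..s} \<Longrightarrow> partition_on {1..n} (Rs i)"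
    and "\<And>j. j \<in> {1..t} \<Longrightarrow> partition_on {1..n} (Cs j)"
    and "\<And>i. i \<in> {1..s} \<Longrightarrow> finer R (Rs i)"
    and "\<And>j. j \<in> {1..t} \<Longrightarrow> finer C (Cs j)"
  shows "loglin n ((\<lambda>i. (Rs i, C)) ` {1..s}) \<inter> loglin n ((\<lambda>j. (R, Cs j)) ` {1..t})
         = loglin n ((\<lambda>(i, j). (Rs i, Cs j)) ` ({1..s} \<times> {1..t}))"
proof -
  note K = key[OF assms]
  define V1 where "V1 = FV.span (\<Union>B\<in>(\<lambda>i. (Rs i, C)) ` {1..s}. U n B)"
  define V2 where "V2 = FV.span (\<Union>B\<in>(\<lambda>j. (R, Cs j)) ` {1..t}. U n B)"
  define V3 where "V3 = FV.span (\<Union>B\<in>(\<lambda>(i, j). (Rs i, Cs j)) ` ({1..s} \<times> {1..t}). U n B)"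
  have K': "V1 \<inter> V2 = V3" unfolding V1_def V2_def V3_def by (rule K)
  have L: "loglin n F = {p. (\<forall>\<pi>\<in>Sym n. p \<pi> > 0) \<and> (\<forall>\<pi>. \<pi> \<notin> Sym n \<longrightarrow> p \<pi> = 0)
      \<and> (\<Sum>\<pi>\<in>Sym n. p \<pi>) = 1
      \<and> (\<lambda>\<pi>. if \<pi> \<in> Sym n then ln (p \<pi>) else 0) \<in> FV.span (\<Union>B\<in>F. U n B)}" for F
    unfolding loglin_def ..
  show ?thesis unfolding L V1_def[symmetric] V2_def[symmetric] V3_def[symmetric] K'[symmetric] by blast
qed

end
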